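(* Let $M$ be a cubic $3$-pole (loops and parallel edges allowed) with exactly three dangling edges, incident with three pairwise distinct vertices $v_1,v_2,v_3$. For each vertex $x$ of $M$ choose an even $(2,2,2)$-pole $H_x$ and a bijection between the three connectors of $H_x$ and the three edge ends at $x$. Construct the $(2,2,2)$-pole $H_M(S_1,S_2,S_3)$ by replacing every vertex $x$ by $H_x$ and every edge of $M$ by two parallel "strands": for each edge of $M$ joining ends at $x$ and $y$ (possibly $x=y$ for a loop), perform the junction of the connector of $H_x$ assigned to the first end with the connector of $H_y$ assigned to the second end; for the dangling edge at $v_i$, the connector of $H_{v_i}$ assigned to that dangling edge is left unjoined and becomes $S_i$. Then $H_M(S_1,S_2,S_3)$ is an even $(2,2,2)$-pole.
   Context: A multipole consists of vertices and edges; each edge has two ends, each either incident with a vertex or free; a free end is a semiedge. All multipoles are cubic (every vertex incident with exactly three edge ends). Semiedges are partitioned into connectors; a $(2,2,2)$-pole has three connectors of size $2$. The junction of two connectors of size $2$ identifies their semiedges in pairs (along an arbitrary bijection) to form two edges. Let $\mathbb{K}=\{(0,1),(1,0),(1,1)\}\subset\mathbb{Z}_2\times\mathbb{Z}_2$. A colouring of a multipole assigns elements of $\mathbb{K}$ to edges so that at every vertex the three incident edge ends get distinct colours. Flow through a connector $S$: $\varphi_*(S)=\sum_{e\in S}\varphi(e)\in\mathbb{Z}_2\times\mathbb{Z}_2$. A $(2,2,2)$-pole is even if for every colouring $\varphi$ the number of its connectors $S$ with $\varphi_*(S)\ne0$ is even. *)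

theory Defs
  imports Main "HOL-Library.Z2" "HOL-Library.Product_Plus"
begin

text \<open>A multipole: vertices, edge ends (darts), incidence of ends with vertices
  (None = free end, i.e. a semiedge), and the involution pairing the two ends of each edge.\<close>
record ('v,'d) mpole =
  verts :: "'v set"
  darts :: "'d set"
  inc :: "'d \<Rightarrow> 'v option"
  mate :: "'d \<Rightarrow> 'd"

definition multipole :: "('v,'d) mpole \<Rightarrow> bool" where
  "multipole P \<longleftrightarrow> finite (verts P) \<and> finite (darts P) \<and>
     (\<forall>d\<in>darts P. mate P d \<in> darts P \<and> mate P d \<noteq> d \<and> mate P (mate P d) = d \<and>
        (\<forall>u. inc P d = Some u \<longrightarrow> u \<in> verts P))"

definition cubic :: "('v,'d) mpole \<Rightarrow> bool" where
  "cubic P \<longleftrightarrow> (\<forall>v\<in>verts P. card {d\<in>darts P. inc P d = Some v} = 3)"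

definition semiedges :: "('v,'d) mpole \<Rightarrow> 'd set" where
  "semiedges P = {d\<in>darts P. inc P d = None}"

definition pole222 :: "('v,'d) mpole \<Rightarrow> (nat \<Rightarrow> 'd set) \<Rightarrow> bool" where
  "pole222 P C \<longleftrightarrow> multipole P \<and> cubic P \<and>
     (\<forall>i<3. C i \<subseteq> semiedges P \<and> card (C i) = 2) \<and>
     (\<forall>i<3. \<forall>j<3. i \<noteq> j \<longrightarrow> C i \<inter> C j = {}) \<and>
     (\<Union>i<3. C i) = semiedges P"

definition K :: "(bit \<times> bit) set" where
  "K = {(0,1), (1,0), (1,1)}"

definition colouring :: "('v,'d) mpole \<Rightarrow> ('d \<Rightarrow> bit \<times> bit) \<Rightarrow> bool" where
  "colouring P \<phi> \<longleftrightarrow>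
     (\<forall>d\<in>darts P. \<phi> d \<in> K \<and> \<phi> (mate P d) = \<phi> d) \<and>
     (\<forall>v\<in>verts P. inj_on \<phi> {d\<in>darts P. inc P d = Some v})"

definition flow :: "('d \<Rightarrow> bit \<times> bit) \<Rightarrow> 'd set \<Rightarrow> bit \<times> bit" where
  "flow \<phi> S = (\<Sum>d\<in>S. \<phi> d)"

definition even222 :: "('v,'d) mpole \<Rightarrow> (nat \<Rightarrow> 'd set) \<Rightarrow> bool" where
  "even222 P C \<longleftrightarrow>
     (\<forall>\<phi>. colouring P \<phi> \<longrightarrow> even (card {i\<in>{0..<3}. flow \<phi> (C i) \<noteq> 0}))"

text \<open>Construction H_M. M: the 3-pole; CH x: connectors of H_x; \<sigma> x: bijection from
  connector indices {0,1,2} onto the ends of M at x; J e: junction bijection used for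
  the edge end e.\<close>

definition aconn :: "('w,'m) mpole \<Rightarrow> ('w \<Rightarrow> nat \<Rightarrow> 'd set) \<Rightarrow> ('w \<Rightarrow> nat \<Rightarrow> 'm) \<Rightarrow> 'm \<Rightarrow> 'd set" where
  "aconn M CH \<sigma> e = (let x = the (inc M e) in CH x (the_inv_into {0..<3} (\<sigma> x) e))"

definition joined :: "('w,'m) mpole \<Rightarrow> ('w \<Rightarrow> nat \<Rightarrow> 'd set) \<Rightarrow> ('w \<Rightarrow> nat \<Rightarrow> 'm) \<Rightarrow> 'w \<Rightarrow> 'd \<Rightarrow> bool" where
  "joined M CH \<sigma> x d \<longleftrightarrow>
     (\<exists>e\<in>darts M. inc M e = Some x \<and> inc M (mate M e) \<noteq> None \<and> d \<in> aconn M CH \<sigma> e)"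

definition glink :: "('w,'m) mpole \<Rightarrow> ('w \<Rightarrow> ('v,'d) mpole) \<Rightarrow> ('w \<Rightarrow> nat \<Rightarrow> 'd set) \<Rightarrow>
    ('w \<Rightarrow> nat \<Rightarrow> 'm) \<Rightarrow> ('m \<Rightarrow> 'd \<Rightarrow> 'd) \<Rightarrow> (('w \<times> 'd) \<times> ('w \<times> 'd)) set" where
  "glink M H CH \<sigma> J =
     {((x,d),(x, mate (H x) d)) | x d. x \<in> verts M \<and> d \<in> darts (H x)} \<union>
     {((x,d),(y, J e d)) | x y e d. e \<in> darts M \<and> inc M e = Some x \<and>
          inc M (mate M e) = Some y \<and> d \<in> aconn M CH \<sigma> e}"

definition HM_darts :: "('w,'m) mpole \<Rightarrow> ('w \<Rightarrow> ('v,'d) mpole) \<Rightarrow> ('w \<Rightarrow> nat \<Rightarrow> 'd set) \<Rightarrow>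
    ('w \<Rightarrow> nat \<Rightarrow> 'm) \<Rightarrow> ('w \<times> 'd) set" where
  "HM_darts M H CH \<sigma> =
     {(x,d). x \<in> verts M \<and> d \<in> darts (H x) \<and> \<not> joined M CH \<sigma> x d}"

text \<open>The resulting multipole: an edge of H_M is a maximal chain of edges of the H_x glued
  by junctions; its two ends are the two non-joined ends of the chain.\<close>
definition HM :: "('w,'m) mpole \<Rightarrow> ('w \<Rightarrow> ('v,'d) mpole) \<Rightarrow> ('w \<Rightarrow> nat \<Rightarrow> 'd set) \<Rightarrow>
    ('w \<Rightarrow> nat \<Rightarrow> 'm) \<Rightarrow> ('m \<Rightarrow> 'd \<Rightarrow> 'd) \<Rightarrow> ('w \<times> 'v, 'w \<times> 'd) mpole" where
  "HM M H CH \<sigma> J =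
     \<lparr> verts = Sigma (verts M) (\<lambda>x. verts (H x)),
       darts = HM_darts M H CH \<sigma>,
       inc = (\<lambda>(x,d). map_option (Pair x) (inc (H x) d)),
       mate = (\<lambda>a. THE b. b \<in> HM_darts M H CH \<sigma> \<and> b \<noteq> a \<and> (a,b) \<in> (glink M H CH \<sigma> J)\<^sup>*) \<rparr>"

definition HM_conn :: "('w,'m) mpole \<Rightarrow> ('w \<Rightarrow> nat \<Rightarrow> 'd set) \<Rightarrow> ('w \<Rightarrow> nat \<Rightarrow> 'm) \<Rightarrow>
    (nat \<Rightarrow> 'm) \<Rightarrow> nat \<Rightarrow> ('w \<times> 'd) set" where
  "HM_conn M CH \<sigma> s i =
     Pair (the (inc M (mate M (s i)))) ` aconn M CH \<sigma> (mate M (s i))"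

end

theory Submission
  imports Defs
begin

lemma invol_even:
  assumes "finite A" and "\<forall>x\<in>A. g x \<in> A \<and> g x \<noteq> x \<and> g (g x) = x"
  shows "even (card A)"
  using assms
proof (induction "card A" arbitrary: A rule: less_induct)
  case less
  show ?case
  proof (cases "A = {}")
    case True then show ?thesis by simp
  next
    case False
    then obtain x where x: "x \<in> A" by blast
    define A' where "A' = A - {x, g x}"
    have gx: "g x \<in> A" "g x \<noteq> x" "g (g x) = x" using less.prems x by auto
    have fin: "finite A'" using less.prems unfolding A'_def by auto
    have cl: "\<forall>y\<in>A'. g y \<in> A' \<and> g y \<noteq> y \<and> g (g y) = y"
      using less.prems gx unfolding A'_def by (metis DiffD1 DiffD2 DiffI insertCI insertE singletonD)
    have c: "card A = card A' + 2"
    proof -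
      have "card A' = card A - card {x, g x}" unfolding A'_def
        using less.prems x gx by (simp add: card_Diff_subset)
      moreover have "card {x, g x} = 2" using gx by simp
      moreover have "card A \<ge> 2" using less.prems x gx
        by (metis \<open>card {x, g x} = 2\<close> card_mono empty_subsetI insert_subset)
      ultimately show ?thesis by simp
    qed
    have "even (card A')" using less.hyps[of A'] fin cl c by simp
    then show ?thesis using c by simp
  qed
qed

lemma funpow_cancel:
  assumes "inj_on f S" "\<And>y. y \<in> S \<Longrightarrow> f y \<in> S"
  shows "(f^^i) y = (f^^i) z \<Longrightarrow> y \<in> S \<Longrightarrow> z \<in> S \<Longrightarrow> y = z"
proof (induction i)
  case 0 then show ?case by simp
next
  case (Suc i)
  have inS: "\<And>w k. w \<in> S \<Longrightarrow> (f^^k) w \<in> S"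
  proof -
    fix w k assume "w \<in> S" then show "(f^^k) w \<in> S" by (induction k) (auto intro: assms(2))
  qed
  have "(f^^i) y = (f^^i) z"
    using Suc.prems inS assms(1) by (auto simp: inj_on_def)
  then show ?case using Suc by blast
qed

lemma path_endpoint:
  fixes \<alpha> \<beta> :: "'a \<Rightarrow> 'a" and U :: "'a set"
  assumes fin: "finite U" and aU: "\<forall>p\<in>U. \<alpha> p \<in> U \<and> \<alpha> (\<alpha> p) = p \<and> \<alpha> p \<noteq> p"
    and bU: "\<forall>p\<in>U. \<beta> p \<in> U \<and> \<beta> (\<beta> p) = p"
    and a: "a \<in> U" "\<beta> a = a"
    and R_def: "R = {(p, \<alpha> p) | p. p \<in> U} \<union> {(p, \<beta> p) | p. p \<in> U}"
  shows "\<exists>b\<in>U. \<beta> b = b \<and> b \<noteq> a \<and> (a,b) \<in> R\<^sup>* \<and>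
           (\<forall>c. (a,c) \<in> R\<^sup>* \<longrightarrow> \<beta> c = c \<longrightarrow> c = a \<or> c = b)"
proof -
  define f :: "'a \<times> bool \<Rightarrow> 'a \<times> bool" where
    "f = (\<lambda>(p,t). if t then (\<alpha> p, False) else (\<beta> p, True))"
  define S :: "('a \<times> bool) set" where "S = U \<times> UNIV"
  define x0 where "x0 = (a, True)"
  have fS: "\<And>y. y \<in> S \<Longrightarrow> f y \<in> S" using aU bU unfolding S_def f_def by auto
  have finj: "inj_on f S"
    unfolding inj_on_def S_def f_def using aU bU by (auto split: if_splits) metis+
  have finS: "finite S" unfolding S_def using fin by simp
  have x0S: "x0 \<in> S" unfolding x0_def S_def using a by simp
  have orbS: "\<And>k. (f^^k) x0 \<in> S"
  proof -
    fix k show "(f^^k) x0 \<in> S" by (induction k) (auto simp: x0S fS)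
  qed
  have nS: "\<And>y. y \<in> S \<Longrightarrow> apsnd Not y \<in> S" unfolding S_def by auto
  have rr: "\<And>y. y \<in> S \<Longrightarrow> f (apsnd Not (f y)) = apsnd Not y"
    unfolding S_def f_def using aU bU by auto
  have cancel: "\<And>i y z. (f^^i) y = (f^^i) z \<Longrightarrow> y \<in> S \<Longrightarrow> z \<in> S \<Longrightarrow> y = z"
    using funpow_cancel[OF finj fS] by blast
  have "\<exists>n>0. (f^^n) x0 = x0"
  proof -
    have "range (\<lambda>k. (f^^k) x0) \<subseteq> S" using orbS by auto
    then have "finite (range (\<lambda>k. (f^^k) x0))" using finS finite_subset by auto
    then have "\<not> inj (\<lambda>k. (f^^k) x0)" using finite_imageD infinite_UNIV_nat by blast
    then obtain i j where ij: "i \<noteq> j" "(f^^i) x0 = (f^^j) x0" unfolding inj_def by blast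
    have "\<exists>i j. i < j \<and> (f^^i) x0 = (f^^j) x0"
      using ij by (metis linorder_neqE_nat)
    then obtain i j where ij: "i < j" "(f^^i) x0 = (f^^j) x0" by blast
    have "(f^^j) x0 = (f^^i) ((f^^(j-i)) x0)" using ij(1)
      by (metis funpow_add le_add_diff_inverse2 less_imp_le o_apply add.commute)
    then have "x0 = (f^^(j-i)) x0" using cancel ij orbS x0S by metis
    then show ?thesis using ij(1) by (intro exI[of _ "j-i"]) auto
  qed
  define N where "N = (LEAST n. n > 0 \<and> (f^^n) x0 = x0)"
  have N: "N > 0" "(f^^N) x0 = x0"
    using LeastI_ex[OF \<open>\<exists>n>0. (f^^n) x0 = x0\<close>] unfolding N_def by auto
  have distinct: "\<And>i j. i < j \<Longrightarrow> j < N \<Longrightarrow> (f^^i) x0 \<noteq> (f^^j) x0"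
  proof
    fix i j assume ij: "i < j" "j < N" "(f^^i) x0 = (f^^j) x0"
    have "(f^^j) x0 = (f^^i) ((f^^(j-i)) x0)" using ij(1)
      by (metis funpow_add le_add_diff_inverse2 less_imp_le o_apply add.commute)
    then have "x0 = (f^^(j-i)) x0" using cancel ij orbS x0S by metis
    moreover have "\<not> (j - i > 0 \<and> (f^^(j-i)) x0 = x0)"
      using not_less_Least[of "j-i" "\<lambda>n. n > 0 \<and> (f^^n) x0 = x0"] ij unfolding N_def[symmetric]
      by linarith
    ultimately show False using ij by auto
  qed
  have modN: "\<And>k. (f^^k) x0 = (f^^(k mod N)) x0"
  proof -
    have q: "\<And>q. (f^^(N*q)) x0 = x0"
    proof -
      fix q show "(f^^(N*q)) x0 = x0"
        by (induction q) (auto simp: funpow_add N(2) simp del: funpow.simps)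
    qed
    fix k
    have "k = k mod N + N * (k div N)" by simp
    then have "(f^^k) x0 = (f^^(k mod N)) ((f^^(N * (k div N))) x0)"
      by (metis funpow_add o_apply)
    then show "(f^^k) x0 = (f^^(k mod N)) x0" using q by simp
  qed
  have last: "(f^^(N-1)) x0 = (a, False)"
  proof -
    have "f ((f^^(N-1)) x0) = (f^^N) x0" using N(1)
      by (metis Suc_diff_1 comp_apply funpow.simps(2))
    also have "\<dots> = f (a, False)" using N(2) a unfolding x0_def f_def by simp
    finally have "f ((f^^(N-1)) x0) = f (a, False)" .
    moreover have "(a, False) \<in> S" using a(1) unfolding S_def by simp
    ultimately show ?thesis using finj orbS[of "N-1"] unfolding inj_on_def by blast
  qed
  have refl: "\<And>k. k < N \<Longrightarrow> apsnd Not ((f^^k) x0) = (f^^(N-1-k)) x0"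
  proof -
    fix k show "k < N \<Longrightarrow> apsnd Not ((f^^k) x0) = (f^^(N-1-k)) x0"
    proof (induction k)
      case 0 then show ?case using last unfolding x0_def by simp
    next
      case (Suc k)
      have "f (apsnd Not ((f^^(Suc k)) x0)) = apsnd Not ((f^^k) x0)"
        using rr orbS by simp
      also have "\<dots> = (f^^(N-1-k)) x0" using Suc by simp
      also have "\<dots> = f ((f^^(N-1-Suc k)) x0)" using Suc.prems
        by (metis Suc_diff_Suc comp_apply diff_Suc_1 diff_Suc_eq_diff_pred funpow.simps(2))
      finally show ?case using finj orbS nS unfolding inj_on_def by blast
    qed
  qed
  have flip: "\<And>k. \<exists>k'. apsnd Not ((f^^k) x0) = (f^^k') x0"
    using refl modN N(1) by (metis mod_less_divisor)
  have noFix: "\<And>y. y \<in> S \<Longrightarrow> apsnd Not y \<noteq> y" by (auto simp: apsnd_def map_prod_def split: prod.splits)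
  obtain m where m: "N = 2*m + 2"
  proof -
    have "even N"
    proof (rule ccontr)
      assume "odd N"
      then obtain m where "N = 2*m+1" using oddE by blast
      then have "apsnd Not ((f^^m) x0) = (f^^m) x0" using refl[of m] by simp
      then show False using noFix orbS by blast
    qed
    then obtain m' where "N = 2*m'" by blast
    then show ?thesis using that[of "m'-1"] N(1) by simp
  qed
  obtain b t where bt: "(f^^m) x0 = (b, t)" by fastforce
  have bU': "b \<in> U" using orbS[of m] bt unfolding S_def by auto
  have "apsnd Not ((f^^m) x0) = f ((f^^m) x0)" using refl[of m] m by simp
  then have "(b, \<not>t) = f (b, t)" using bt by simp
  then have tb: "\<not> t" "\<beta> b = b" using aU bU' unfolding f_def by (auto split: if_splits)
  have ba: "b \<noteq> a"
  proof
    assume "b = a"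
    then have "(f^^m) x0 = (f^^(N-1)) x0" using bt tb last by simp
    then show False using distinct[of m "N-1"] m by simp
  qed
  have reach: "\<And>k. (a, fst ((f^^k) x0)) \<in> R\<^sup>*"
  proof -
    fix k show "(a, fst ((f^^k) x0)) \<in> R\<^sup>*"
    proof (induction k)
      case 0 then show ?case unfolding x0_def by simp
    next
      case (Suc k)
      obtain p t where pt: "(f^^k) x0 = (p,t)" by fastforce
      have pU: "p \<in> U" using orbS[of k] pt unfolding S_def by auto
      have "(p, fst ((f^^(Suc k)) x0)) \<in> R"
        using pt pU unfolding R_def f_def by auto
      then show ?case using Suc pt by (metis fst_conv rtrancl.rtrancl_into_rtrancl)
    qed
  qed
  have inO: "\<And>c. (a,c) \<in> R\<^sup>* \<Longrightarrow> \<exists>k. (f^^k) x0 = (c, True)"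
  proof -
    fix c assume "(a,c) \<in> R\<^sup>*"
    then show "\<exists>k. (f^^k) x0 = (c, True)"
    proof (induction rule: rtrancl_induct)
      case base then show ?case using x0_def by (intro exI[of _ 0]) simp
    next
      case (step c c')
      then obtain k where k: "(f^^k) x0 = (c, True)" by blast
      have cU: "c \<in> U" using orbS[of k] k unfolding S_def by auto
      from step(2) consider "c' = \<alpha> c" | "c' = \<beta> c" unfolding R_def by blast
      then show ?case
      proof cases
        case 1
        have "(f^^(Suc k)) x0 = (c', False)" using k 1 unfolding f_def by simp
        then show ?thesis using flip[of "Suc k"] by auto
      next
        case 2
        obtain k' where "apsnd Not ((f^^k) x0) = (f^^k') x0" using flip by blast
        then have "(f^^k') x0 = (c, False)" using k by simp
        then have "(f^^(Suc k')) x0 = (c', True)" using 2 unfolding f_def by simp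
        then show ?thesis by blast
      qed
    qed
  qed
  have uniq: "\<And>c. (a,c) \<in> R\<^sup>* \<Longrightarrow> \<beta> c = c \<Longrightarrow> c = a \<or> c = b"
  proof -
    fix c assume c: "(a,c) \<in> R\<^sup>*" "\<beta> c = c"
    obtain k0 where "(f^^k0) x0 = (c, True)" using inO c by blast
    then obtain k1 where "(f^^k1) x0 = (c, False)" using flip[of k0] by (metis apsnd_conv)
    then have k: "(f^^(k1 mod N)) x0 = (c, False)" using modN by simp
    define k where "k = k1 mod N"
    have kN: "k < N" unfolding k_def using N(1) by simp
    have kk: "(f^^k) x0 = (c, False)" using k k_def by simp
    have "(f^^(Suc k)) x0 = (c, True)" using kk c(2) unfolding f_def by simp
    also have "\<dots> = (f^^(N-1-k)) x0" using refl[OF kN] kk by simp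
    finally have e: "(f^^(Suc k)) x0 = (f^^(N-1-k)) x0" .
    show "c = a \<or> c = b"
    proof (cases "k = N - 1")
      case True then show ?thesis using kk last by simp
    next
      case False
      then have "Suc k < N" using kN by simp
      have n1: "\<not> Suc k < N - 1 - k" using distinct[of "Suc k" "N-1-k"] e by auto
      have n2: "\<not> N - 1 - k < Suc k" using distinct[of "N-1-k" "Suc k"] e \<open>Suc k < N\<close> by auto
      have "Suc k = N - 1 - k" using n1 n2 by linarith
      then have "k = m" using m by simp
      then show ?thesis using kk bt by simp
    qed
  qed
  show ?thesis using bU' tb ba reach[of m] bt uniq by (intro bexI[of _ b]) auto
qed


theorem mainTheorem5:
  fixes M :: "('w,'m) mpole"
    and s :: "nat \<Rightarrow> 'm" and v :: "nat \<Rightarrow> 'w"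
    and H :: "'w \<Rightarrow> ('v,'d) mpole" and CH :: "'w \<Rightarrow> nat \<Rightarrow> 'd set"
    and \<sigma> :: "'w \<Rightarrow> nat \<Rightarrow> 'm" and J :: "'m \<Rightarrow> 'd \<Rightarrow> 'd"
  assumes M_mp: "multipole M" and M_cubic: "cubic M"
    and s_inj: "inj_on s {0..<3}"
    and M_semi: "semiedges M = s ` {0..<3}"
    and dangling: "\<forall>i<3. inc M (mate M (s i)) = Some (v i)"
    and v_inj: "inj_on v {0..<3}"
    and H_even: "\<forall>x\<in>verts M. pole222 (H x) (CH x) \<and> even222 (H x) (CH x)"
    and \<sigma>_bij: "\<forall>x\<in>verts M. bij_betw (\<sigma> x) {0..<3} {e\<in>darts M. inc M e = Some x}"
    and J_junction: "\<forall>e\<in>darts M. inc M e \<noteq> None \<longrightarrow> inc M (mate M e) \<noteq> None \<longrightarrow>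
        bij_betw (J e) (aconn M CH \<sigma> e) (aconn M CH \<sigma> (mate M e)) \<and>
        (\<forall>d\<in>aconn M CH \<sigma> e. J (mate M e) (J e d) = d)"
  shows "pole222 (HM M H CH \<sigma> J) (HM_conn M CH \<sigma> s) \<and>
         even222 (HM M H CH \<sigma> J) (HM_conn M CH \<sigma> s)"
proof -
  have Mm: "\<And>e. e \<in> darts M \<Longrightarrow> mate M e \<in> darts M \<and> mate M e \<noteq> e \<and> mate M (mate M e) = e"
    using M_mp unfolding multipole_def by blast
  have Mi: "\<And>e u. e \<in> darts M \<Longrightarrow> inc M e = Some u \<Longrightarrow> u \<in> verts M"
    using M_mp unfolding multipole_def by blast
  have Hp: "\<And>x. x \<in> verts M \<Longrightarrow> multipole (H x) \<and> cubic (H x) \<and>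
     (\<forall>i<3. CH x i \<subseteq> semiedges (H x) \<and> card (CH x i) = 2) \<and>
     (\<forall>i<3. \<forall>j<3. i \<noteq> j \<longrightarrow> CH x i \<inter> CH x j = {}) \<and>
     (\<Union>i<3. CH x i) = semiedges (H x)"
    using H_even unfolding pole222_def by blast
  have Hm: "\<And>x d. x \<in> verts M \<Longrightarrow> d \<in> darts (H x) \<Longrightarrow>
      mate (H x) d \<in> darts (H x) \<and> mate (H x) d \<noteq> d \<and> mate (H x) (mate (H x) d) = d \<and>
        (\<forall>u. inc (H x) d = Some u \<longrightarrow> u \<in> verts (H x))"
    using Hp unfolding multipole_def by blast
  define idx where "idx = (\<lambda>x e. the_inv_into {0..<3} (\<sigma> x) e)"
  have idx1: "\<And>x e. e \<in> darts M \<Longrightarrow> inc M e = Some x \<Longrightarrow> idx x e < 3 \<and> \<sigma> x (idx x e) = e"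
  proof -
    fix x e assume e: "e \<in> darts M" "inc M e = Some x"
    then have x: "x \<in> verts M" using Mi by blast
    have b: "bij_betw (\<sigma> x) {0..<3} {e\<in>darts M. inc M e = Some x}" using \<sigma>_bij x by blast
    then have "inj_on (\<sigma> x) {0..<3}" and im: "\<sigma> x ` {0..<3} = {e\<in>darts M. inc M e = Some x}"
      unfolding bij_betw_def by auto
    then show "idx x e < 3 \<and> \<sigma> x (idx x e) = e" unfolding idx_def
      using e the_inv_into_into[of "\<sigma> x" "{0..<3}" e "{0..<3}"] f_the_inv_into_f[of "\<sigma> x" "{0..<3}" e]
      by auto
  qed
  have idx2: "\<And>x j. x \<in> verts M \<Longrightarrow> j < 3 \<Longrightarrow> idx x (\<sigma> x j) = j \<and> \<sigma> x j \<in> darts M \<and> inc M (\<sigma> x j) = Some x"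
  proof -
    fix x and j :: nat assume x: "x \<in> verts M" "j < 3"
    have b: "bij_betw (\<sigma> x) {0..<3} {e\<in>darts M. inc M e = Some x}" using \<sigma>_bij x by blast
    then have "inj_on (\<sigma> x) {0..<3}" and im: "\<sigma> x ` {0..<3} = {e\<in>darts M. inc M e = Some x}"
      unfolding bij_betw_def by auto
    then show "idx x (\<sigma> x j) = j \<and> \<sigma> x j \<in> darts M \<and> inc M (\<sigma> x j) = Some x"
      unfolding idx_def using x the_inv_into_f_f by fastforce
  qed
  have ac: "\<And>x e. e \<in> darts M \<Longrightarrow> inc M e = Some x \<Longrightarrow> aconn M CH \<sigma> e = CH x (idx x e)"
    unfolding aconn_def idx_def Let_def by simp
  have acsemi: "\<And>x e. e \<in> darts M \<Longrightarrow> inc M e = Some x \<Longrightarrow>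
      aconn M CH \<sigma> e \<subseteq> semiedges (H x) \<and> card (aconn M CH \<sigma> e) = 2"
    using ac idx1 Hp Mi by metis
  have acdarts: "\<And>x e d. e \<in> darts M \<Longrightarrow> inc M e = Some x \<Longrightarrow> d \<in> aconn M CH \<sigma> e \<Longrightarrow>
      d \<in> darts (H x) \<and> inc (H x) d = None"
    using acsemi unfolding semiedges_def by blast
  have acuniq: "\<And>x e e' d. e \<in> darts M \<Longrightarrow> e' \<in> darts M \<Longrightarrow> inc M e = Some x \<Longrightarrow> inc M e' = Some x
      \<Longrightarrow> d \<in> aconn M CH \<sigma> e \<Longrightarrow> d \<in> aconn M CH \<sigma> e' \<Longrightarrow> e = e'"
  proof -
    fix x e e' d assume a: "e \<in> darts M" "e' \<in> darts M" "inc M e = Some x" "inc M e' = Some x"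
      "d \<in> aconn M CH \<sigma> e" "d \<in> aconn M CH \<sigma> e'"
    have x: "x \<in> verts M" using a Mi by blast
    have "idx x e = idx x e'"
    proof (rule ccontr)
      assume "idx x e \<noteq> idx x e'"
      then have "CH x (idx x e) \<inter> CH x (idx x e') = {}" using Hp[OF x] idx1 a by blast
      then show False using a ac by auto
    qed
    then show "e = e'" using idx1 a by metis
  qed
  define U where "U = {p. fst p \<in> verts M \<and> snd p \<in> darts (H (fst p))}"
  define jd where "jd = (\<lambda>x d. joined M CH \<sigma> x d)"
  define jE where "jE = (\<lambda>x d. SOME e. e \<in> darts M \<and> inc M e = Some x \<and> inc M (mate M e) \<noteq> None \<and> d \<in> aconn M CH \<sigma> e)"
  have jE1: "\<And>x d. jd x d \<Longrightarrow> jE x d \<in> darts M \<and> inc M (jE x d) = Some x \<and> inc M (mate M (jE x d)) \<noteq> None \<and> d \<in> aconn M CH \<sigma> (jE x d)"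
  proof -
    fix x d assume "jd x d"
    then have "\<exists>e. e \<in> darts M \<and> inc M e = Some x \<and> inc M (mate M e) \<noteq> None \<and> d \<in> aconn M CH \<sigma> e"
      unfolding jd_def joined_def by blast
    then show "jE x d \<in> darts M \<and> inc M (jE x d) = Some x \<and> inc M (mate M (jE x d)) \<noteq> None \<and> d \<in> aconn M CH \<sigma> (jE x d)"
      unfolding jE_def by (rule someI_ex)
  qed
  have jE2: "\<And>x d e. e \<in> darts M \<Longrightarrow> inc M e = Some x \<Longrightarrow> inc M (mate M e) \<noteq> None \<Longrightarrow> d \<in> aconn M CH \<sigma> e
      \<Longrightarrow> jd x d \<and> jE x d = e"
  proof -
    fix x d e assume a: "e \<in> darts M" "inc M e = Some x" "inc M (mate M e) \<noteq> None" "d \<in> aconn M CH \<sigma> e"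
    then have j: "jd x d" unfolding jd_def joined_def by blast
    then show "jd x d \<and> jE x d = e" using jE1[OF j] acuniq a by blast
  qed
  define \<alpha> where "\<alpha> = (\<lambda>p::'w\<times>'d. (fst p, mate (H (fst p)) (snd p)))"
  define \<beta> where "\<beta> = (\<lambda>p::'w\<times>'d. if jd (fst p) (snd p) then
      (the (inc M (mate M (jE (fst p) (snd p)))), J (jE (fst p) (snd p)) (snd p)) else p)"
  have \<alpha>U: "\<forall>p\<in>U. \<alpha> p \<in> U \<and> \<alpha> (\<alpha> p) = p \<and> \<alpha> p \<noteq> p"
    unfolding U_def \<alpha>_def using Hm by (auto simp: prod_eq_iff)
  have \<beta>j: "\<And>x d e y. jd x d \<Longrightarrow> e = jE x d \<Longrightarrow> inc M (mate M e) = Some y \<Longrightarrow>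
     \<beta> (x,d) = (y, J e d) \<and> y \<in> verts M \<and> J e d \<in> aconn M CH \<sigma> (mate M e) \<and> J e d \<in> darts (H y)
     \<and> jd y (J e d) \<and> jE y (J e d) = mate M e \<and> J (mate M e) (J e d) = d \<and> (y, J e d) \<noteq> (x, d)"
  proof -
    fix x d e y assume a: "jd x d" "e = jE x d" "inc M (mate M e) = Some y"
    note e = jE1[OF a(1), folded a(2)]
    have me: "mate M e \<in> darts M" "mate M (mate M e) = e" "mate M e \<noteq> e" using Mm e by auto
    have y: "y \<in> verts M" using Mi me a by blast
    have bj: "bij_betw (J e) (aconn M CH \<sigma> e) (aconn M CH \<sigma> (mate M e))"
      and jj: "J (mate M e) (J e d) = d" using J_junction e a by auto
    have Jin: "J e d \<in> aconn M CH \<sigma> (mate M e)" using bj e unfolding bij_betw_def by auto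
    have Jd: "J e d \<in> darts (H y)" using acdarts[OF me(1) a(3) Jin] by blast
    have j2: "jd y (J e d) \<and> jE y (J e d) = mate M e"
      using jE2[OF me(1) a(3) _ Jin] me e by simp
    have ne: "(y, J e d) \<noteq> (x, d)"
    proof
      assume "(y, J e d) = (x, d)"
      then have "y = x" "J e d = d" by auto
      then have "mate M e = e" using acuniq[OF me(1) e[THEN conjunct1]] a(3) e Jin by auto
      then show False using me by simp
    qed
    show "\<beta> (x,d) = (y, J e d) \<and> y \<in> verts M \<and> J e d \<in> aconn M CH \<sigma> (mate M e) \<and> J e d \<in> darts (H y)
     \<and> jd y (J e d) \<and> jE y (J e d) = mate M e \<and> J (mate M e) (J e d) = d \<and> (y, J e d) \<noteq> (x, d)"
      unfolding \<beta>_def using a y Jin Jd j2 jj ne by simp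
  qed
  have \<beta>U: "\<forall>p\<in>U. \<beta> p \<in> U \<and> \<beta> (\<beta> p) = p"
  proof
    fix p assume p: "p \<in> U"
    obtain x d where xd: "p = (x,d)" by fastforce
    show "\<beta> p \<in> U \<and> \<beta> (\<beta> p) = p"
    proof (cases "jd x d")
      case True
      note e = jE1[OF True]
      then obtain y where y: "inc M (mate M (jE x d)) = Some y" by blast
      note b1 = \<beta>j[OF True refl y]
      note b2 = \<beta>j[OF b1[THEN conjunct2, THEN conjunct2, THEN conjunct2, THEN conjunct2, THEN conjunct1]
          b1[THEN conjunct2, THEN conjunct2, THEN conjunct2, THEN conjunct2, THEN conjunct2, THEN conjunct1, symmetric]]
      have "inc M (mate M (mate M (jE x d))) = Some x" using Mm e by simp
      note b3 = b2[OF this]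
      show ?thesis using b1 b3 xd unfolding U_def by simp
    next
      case False
      then show ?thesis using p xd unfolding \<beta>_def by simp
    qed
  qed
  have \<beta>fix: "\<And>p. p \<in> U \<Longrightarrow> \<beta> p = p \<longleftrightarrow> \<not> jd (fst p) (snd p)"
  proof -
    fix p assume p: "p \<in> U"
    obtain x d where xd: "p = (x,d)" by fastforce
    show "\<beta> p = p \<longleftrightarrow> \<not> jd (fst p) (snd p)"
    proof (cases "jd x d")
      case True
      note e = jE1[OF True]
      then obtain y where y: "inc M (mate M (jE x d)) = Some y" by blast
      show ?thesis using \<beta>j[OF True refl y] xd True by simp
    next
      case False then show ?thesis unfolding \<beta>_def using xd by simp
    qed
  qed
  define GL where "GL = glink M H CH \<sigma> J"
  have gl1: "\<And>p q. (p,q) \<in> GL \<Longrightarrow> p \<in> U \<and> (q = \<alpha> p \<or> (jd (fst p) (snd p) \<and> q = \<beta> p))"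
  proof -
    fix p q assume "(p,q) \<in> GL"
    then consider (a) x d where "p = (x,d)" "q = (x, mate (H x) d)" "x \<in> verts M" "d \<in> darts (H x)"
      | (b) x y e d where "p = (x,d)" "q = (y, J e d)" "e \<in> darts M" "inc M e = Some x"
          "inc M (mate M e) = Some y" "d \<in> aconn M CH \<sigma> e"
      unfolding GL_def glink_def by blast
    then show "p \<in> U \<and> (q = \<alpha> p \<or> (jd (fst p) (snd p) \<and> q = \<beta> p))"
    proof cases
      case a then show ?thesis unfolding U_def \<alpha>_def by simp
    next
      case b
      have j: "jd x d \<and> jE x d = e" using jE2[OF b(3,4) _ b(6)] b(5) by simp
      have x: "x \<in> verts M" using Mi b by blast
      show ?thesis using \<beta>j[of x d e y] j b acdarts x unfolding U_def by auto
    qed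
  qed
  have gl2: "\<And>p. p \<in> U \<Longrightarrow> (p, \<alpha> p) \<in> GL"
    unfolding GL_def glink_def U_def \<alpha>_def by force
  have gl3: "\<And>p. p \<in> U \<Longrightarrow> jd (fst p) (snd p) \<Longrightarrow> (p, \<beta> p) \<in> GL"
  proof -
    fix p assume p: "p \<in> U" "jd (fst p) (snd p)"
    obtain x d where xd: "p = (x,d)" by fastforce
    note e = jE1[OF p(2)[unfolded xd fst_conv snd_conv]]
    then obtain y where y: "inc M (mate M (jE x d)) = Some y" by blast
    have "\<beta> p = (y, J (jE x d) d)" using \<beta>j[OF _ refl y] e xd p by simp
    then show "(p, \<beta> p) \<in> GL" unfolding GL_def glink_def using e y xd by blast
  qed
  have glsym: "\<And>p q. (p,q) \<in> GL \<Longrightarrow> (q,p) \<in> GL"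
  proof -
    fix p q assume pq: "(p,q) \<in> GL"
    note g = gl1[OF pq]
    then consider "q = \<alpha> p" | "jd (fst p) (snd p)" "q = \<beta> p" by blast
    then show "(q,p) \<in> GL"
    proof cases
      case 1 then show ?thesis using gl2 \<alpha>U g by metis
    next
      case 2
      have qU: "q \<in> U" "\<beta> q = p" using \<beta>U g 2 by auto
      have "\<beta> q \<noteq> q" using \<beta>fix[OF g[THEN conjunct1]] 2 qU by auto
      then have "jd (fst q) (snd q)" using \<beta>fix[OF qU(1)] by blast
      then show ?thesis using gl3[OF qU(1)] qU by simp
    qed
  qed
  have rtsym: "\<And>p q. (p,q) \<in> GL\<^sup>* \<Longrightarrow> (q,p) \<in> GL\<^sup>*"
  proof -
    fix p q assume "(p,q) \<in> GL\<^sup>*"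
    then show "(q,p) \<in> GL\<^sup>*"
    proof (induction rule: rtrancl_induct)
      case base then show ?case by simp
    next
      case (step y z) then show ?case using glsym by (meson converse_rtrancl_into_rtrancl)
    qed
  qed
  define R where "R = {(p, \<alpha> p) | p. p \<in> U} \<union> {(p, \<beta> p) | p. p \<in> U}"
  have RGL: "R\<^sup>* = GL\<^sup>*"
  proof
    have "R \<subseteq> GL\<^sup>="
    proof
      fix pq assume "pq \<in> R"
      then obtain p q where pq: "pq = (p,q)" "p \<in> U" "q = \<alpha> p \<or> q = \<beta> p" unfolding R_def by blast
      show "pq \<in> GL\<^sup>="
      proof (cases "q = \<alpha> p")
        case True then show ?thesis using gl2 pq by simp
      next
        case False
        then have q: "q = \<beta> p" using pq by simp
        show ?thesis
        proof (cases "jd (fst p) (snd p)")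
          case True then show ?thesis using gl3 pq q by simp
        next
          case False then have "q = p" using \<beta>fix[OF pq(2)] q by simp
          then show ?thesis using pq by simp
        qed
      qed
    qed
    then show "R\<^sup>* \<subseteq> GL\<^sup>*" by (metis rtrancl_mono rtrancl_reflcl)
  next
    have "GL \<subseteq> R" using gl1 unfolding R_def by fast
    then show "GL\<^sup>* \<subseteq> R\<^sup>*" by (rule rtrancl_mono)
  qed
  have finU: "finite U"
  proof -
    have "U = Sigma (verts M) (\<lambda>x. darts (H x))" unfolding U_def by auto
    moreover have "finite (verts M)" using M_mp unfolding multipole_def by blast
    moreover have "\<forall>x\<in>verts M. finite (darts (H x))" using Hp unfolding multipole_def by blast
    ultimately show ?thesis by auto
  qed
  define D where "D = HM_darts M H CH \<sigma>"
  have D_eq: "D = {p\<in>U. \<beta> p = p}"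
    unfolding D_def HM_darts_def using \<beta>fix unfolding U_def jd_def by auto
  have endpt: "\<And>a. a \<in> D \<Longrightarrow> \<exists>!b. b \<in> D \<and> b \<noteq> a \<and> (a,b) \<in> GL\<^sup>*"
  proof -
    fix a assume a: "a \<in> D"
    obtain b where b: "b \<in> U" "\<beta> b = b" "b \<noteq> a" "(a,b) \<in> R\<^sup>*"
      "\<forall>c. (a,c) \<in> R\<^sup>* \<longrightarrow> \<beta> c = c \<longrightarrow> c = a \<or> c = b"
      using path_endpoint[OF finU \<alpha>U \<beta>U _ _ R_def] a D_eq by blast
    show "\<exists>!b. b \<in> D \<and> b \<noteq> a \<and> (a,b) \<in> GL\<^sup>*"
      using b D_eq RGL by (intro ex1I[of _ b]) auto
  qed
  define HP where "HP = HM M H CH \<sigma> J"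
  have HPv: "verts HP = Sigma (verts M) (\<lambda>x. verts (H x))" unfolding HP_def HM_def by simp
  have HPd: "darts HP = D" unfolding HP_def HM_def D_def by simp
  have HPi: "\<And>x d. inc HP (x,d) = map_option (Pair x) (inc (H x) d)" unfolding HP_def HM_def by simp
  have HPm: "\<And>a. a \<in> D \<Longrightarrow> mate HP a \<in> D \<and> mate HP a \<noteq> a \<and> (a, mate HP a) \<in> GL\<^sup>*"
  proof -
    fix a assume a: "a \<in> D"
    have "mate HP a = (THE b. b \<in> D \<and> b \<noteq> a \<and> (a,b) \<in> GL\<^sup>*)"
      unfolding HP_def HM_def D_def GL_def by simp
    then show "mate HP a \<in> D \<and> mate HP a \<noteq> a \<and> (a, mate HP a) \<in> GL\<^sup>*"
      using theI'[OF endpt[OF a]] by simp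
  qed
  have HPu: "\<And>a b. a \<in> D \<Longrightarrow> b \<in> D \<Longrightarrow> (a,b) \<in> GL\<^sup>* \<Longrightarrow> b = a \<or> b = mate HP a"
    using endpt HPm by metis
  have HPmm: "\<And>a. a \<in> D \<Longrightarrow> mate HP (mate HP a) = a"
  proof -
    fix a assume a: "a \<in> D"
    note m = HPm[OF a]
    have "(mate HP a, a) \<in> GL\<^sup>*" using rtsym m by blast
    then show "mate HP (mate HP a) = a" using HPu[of "mate HP a" a] m a by metis
  qed
  have tf: "\<And>i. i < 3 \<Longrightarrow> s i \<in> darts M \<and> inc M (s i) = None \<and> mate M (s i) \<in> darts M \<and>
      inc M (mate M (s i)) = Some (v i) \<and> mate M (mate M (s i)) = s i \<and> v i \<in> verts M"
  proof -
    fix i :: nat assume i: "i < 3"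
    have "s i \<in> semiedges M" using M_semi i by simp
    then have si: "s i \<in> darts M" "inc M (s i) = None" unfolding semiedges_def by auto
    then show "s i \<in> darts M \<and> inc M (s i) = None \<and> mate M (s i) \<in> darts M \<and>
      inc M (mate M (s i)) = Some (v i) \<and> mate M (mate M (s i)) = s i \<and> v i \<in> verts M"
      using Mm[OF si(1)] dangling i Mi by metis
  qed
  have conn_eq: "\<And>i. i < 3 \<Longrightarrow> HM_conn M CH \<sigma> s i = Pair (v i) ` aconn M CH \<sigma> (mate M (s i))"
    unfolding HM_conn_def using dangling by simp
  have Dchar: "\<And>x d. (x,d) \<in> D \<longleftrightarrow> x \<in> verts M \<and> d \<in> darts (H x) \<and> \<not> jd x d"
    unfolding D_def HM_darts_def jd_def by simp
  have conn_nj: "\<And>i d. i < 3 \<Longrightarrow> d \<in> aconn M CH \<sigma> (mate M (s i)) \<Longrightarrow> (v i, d) \<in> D \<and> inc HP (v i, d) = None"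
  proof -
    fix i d assume i: "i < 3" and d: "d \<in> aconn M CH \<sigma> (mate M (s i))"
    note t = tf[OF i]
    have dd: "d \<in> darts (H (v i)) \<and> inc (H (v i)) d = None" using acdarts t d by blast
    have "\<not> jd (v i) d"
    proof
      assume j: "jd (v i) d"
      note e = jE1[OF j]
      then have "jE (v i) d = mate M (s i)" using acuniq t d by blast
      then show False using e t by simp
    qed
    then show "(v i, d) \<in> D \<and> inc HP (v i, d) = None" using Dchar dd t HPi by simp
  qed
  have DU: "D \<subseteq> U" using D_eq by blast
  have vtxD: "\<And>x d u. x \<in> verts M \<Longrightarrow> d \<in> darts (H x) \<Longrightarrow> inc (H x) d = Some u \<Longrightarrow> (x,d) \<in> D"
  proof -
    fix x d u assume a: "x \<in> verts M" "d \<in> darts (H x)" "inc (H x) d = Some u"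
    have "\<not> jd x d"
    proof
      assume j: "jd x d"
      note e = jE1[OF j]
      then show False using acdarts[of "jE x d" x d] a by simp
    qed
    then show "(x,d) \<in> D" using Dchar a by simp
  qed
  have semiHP: "semiedges HP = {p \<in> D. inc HP p = None}" unfolding semiedges_def HPd by simp
  have mpHP: "multipole HP"
    unfolding multipole_def
  proof (intro conjI ballI)
    have "finite (verts M)" using M_mp unfolding multipole_def by blast
    moreover have "\<forall>x\<in>verts M. finite (verts (H x))" using Hp unfolding multipole_def by blast
    ultimately show "finite (verts HP)" unfolding HPv by auto
    show "finite (darts HP)" using finU DU HPd finite_subset by metis
  next
    fix a assume a: "a \<in> darts HP"
    then show "mate HP a \<in> darts HP" "mate HP a \<noteq> a" "mate HP (mate HP a) = a"
      using HPm HPmm HPd by auto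
    show "\<forall>u. inc HP a = Some u \<longrightarrow> u \<in> verts HP"
    proof (intro allI impI)
      fix u assume u: "inc HP a = Some u"
      obtain x d where xd: "a = (x,d)" by fastforce
      have xdU: "x \<in> verts M" "d \<in> darts (H x)" using a HPd DU xd unfolding U_def by auto
      obtain u' where u': "inc (H x) d = Some u'" "u = (x,u')" using u xd HPi by auto
      then show "u \<in> verts HP" using Hm[OF xdU] xdU HPv by auto
    qed
  qed
  have cubHP: "cubic HP"
    unfolding cubic_def
  proof
    fix w assume w: "w \<in> verts HP"
    obtain x u where xu: "w = (x,u)" by fastforce
    have x: "x \<in> verts M" "u \<in> verts (H x)" using w xu HPv by auto
    have "{p \<in> darts HP. inc HP p = Some w} = Pair x ` {d \<in> darts (H x). inc (H x) d = Some u}"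
    proof
      show "{p \<in> darts HP. inc HP p = Some w} \<subseteq> Pair x ` {d \<in> darts (H x). inc (H x) d = Some u}"
      proof
        fix p assume p: "p \<in> {p \<in> darts HP. inc HP p = Some w}"
        obtain y d where yd: "p = (y,d)" by fastforce
        have "y \<in> verts M" "d \<in> darts (H y)" using p yd HPd DU unfolding U_def by auto
        then show "p \<in> Pair x ` {d \<in> darts (H x). inc (H x) d = Some u}"
          using p yd HPi xu by auto
      qed
    next
      show "Pair x ` {d \<in> darts (H x). inc (H x) d = Some u} \<subseteq> {p \<in> darts HP. inc HP p = Some w}"
        using vtxD x HPd HPi xu by auto
    qed
    moreover have "card {d \<in> darts (H x). inc (H x) d = Some u} = 3"
      using Hp[OF x(1)] x(2) unfolding cubic_def by blast
    moreover have "inj_on (Pair x) A" for A by (simp add: inj_on_def)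
    ultimately show "card {p \<in> darts HP. inc HP p = Some w} = 3" by (metis card_image)
  qed
  have injP: "\<And>x A. inj_on (Pair x) A" by (simp add: inj_on_def)
  have poleHP: "pole222 HP (HM_conn M CH \<sigma> s)"
    unfolding pole222_def
  proof (intro conjI mpHP cubHP allI impI)
    fix i :: nat assume i: "i < 3"
    show "HM_conn M CH \<sigma> s i \<subseteq> semiedges HP"
      using conn_eq[OF i] conn_nj[OF i] semiHP by auto
    show "card (HM_conn M CH \<sigma> s i) = 2"
      using conn_eq[OF i] acsemi tf[OF i] card_image[OF injP] by metis
  next
    fix i j :: nat assume ij: "i < 3" "j < 3" "i \<noteq> j"
    then have "v i \<noteq> v j" using v_inj unfolding inj_on_def by auto
    then show "HM_conn M CH \<sigma> s i \<inter> HM_conn M CH \<sigma> s j = {}"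
      using conn_eq ij by auto
  next
    show "(\<Union>i<3. HM_conn M CH \<sigma> s i) = semiedges HP"
    proof
      show "(\<Union>i<3. HM_conn M CH \<sigma> s i) \<subseteq> semiedges HP"
        using conn_eq conn_nj semiHP by auto
    next
      show "semiedges HP \<subseteq> (\<Union>i<3. HM_conn M CH \<sigma> s i)"
      proof
        fix p assume p: "p \<in> semiedges HP"
        obtain x d where xd: "p = (x,d)" by fastforce
        have pD: "x \<in> verts M" "d \<in> darts (H x)" "\<not> jd x d" "inc (H x) d = None"
          using p semiHP xd Dchar HPi by auto
        then have "d \<in> semiedges (H x)" unfolding semiedges_def by simp
        then obtain j where j: "j < 3" "d \<in> CH x j" using Hp[OF pD(1)] by blast
        define e where "e = \<sigma> x j"
        note ej = idx2[OF pD(1) j(1), folded e_def]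
        have ace: "aconn M CH \<sigma> e = CH x j" using ac ej by simp
        have "inc M (mate M e) = None"
        proof (rule ccontr)
          assume "inc M (mate M e) \<noteq> None"
          then have "jd x d" using jE2[of e x d] ej ace j by blast
          then show False using pD by blast
        qed
        then have "mate M e \<in> semiedges M" using Mm ej unfolding semiedges_def by simp
        then obtain i where i: "i < 3" "mate M e = s i" using M_semi by auto
        then have ee: "e = mate M (s i)" using Mm ej by metis
        then have "x = v i" using tf[OF i(1)] ej by simp
        then have "p \<in> HM_conn M CH \<sigma> s i" using conn_eq[OF i(1)] ee ace j xd by simp
        then show "p \<in> (\<Union>i<3. HM_conn M CH \<sigma> s i)" using i by blast
      qed
    qed
  qed
  have evHP: "even222 HP (HM_conn M CH \<sigma> s)"
    unfolding even222_def
  proof (intro allI impI)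
    fix \<phi> assume cl: "colouring HP \<phi>"
    have \<phi>m: "\<And>a. a \<in> D \<Longrightarrow> \<phi> (mate HP a) = \<phi> a \<and> \<phi> a \<in> K"
      using cl HPd unfolding colouring_def by auto
    define col where "col = (\<lambda>p. if \<exists>b\<in>D. (p,b) \<in> GL\<^sup>* then \<phi> (SOME b. b \<in> D \<and> (p,b) \<in> GL\<^sup>*) else (0,1))"
    have col_eq: "\<And>p b. (p,b) \<in> GL\<^sup>* \<Longrightarrow> b \<in> D \<Longrightarrow> col p = \<phi> b"
    proof -
      fix p b assume pb: "(p,b) \<in> GL\<^sup>*" "b \<in> D"
      have ex: "\<exists>b. b \<in> D \<and> (p,b) \<in> GL\<^sup>*" using pb by blast
      define b' where "b' = (SOME b. b \<in> D \<and> (p,b) \<in> GL\<^sup>*)"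
      have b': "b' \<in> D" "(p,b') \<in> GL\<^sup>*" using someI_ex[OF ex] unfolding b'_def by auto
      have "(b,b') \<in> GL\<^sup>*" using rtsym[OF pb(1)] b'(2) by (rule rtrancl_trans)
      then have "b' = b \<or> b' = mate HP b" using HPu pb b' by blast
      then have "\<phi> b' = \<phi> b" using \<phi>m[OF pb(2)] by (elim disjE) simp_all
      then show "col p = \<phi> b" unfolding col_def b'_def[symmetric] using pb by auto
    qed
    have col_link: "\<And>p q. (p,q) \<in> GL \<Longrightarrow> col p = col q"
    proof -
      fix p q assume pq: "(p,q) \<in> GL"
      have qp: "(q,p) \<in> GL" using glsym pq by blast
      show "col p = col q"
      proof (cases "\<exists>b\<in>D. (p,b) \<in> GL\<^sup>*")
        case True
        then obtain b where b: "b \<in> D" "(p,b) \<in> GL\<^sup>*" by blast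
        have "(q,b) \<in> GL\<^sup>*" using qp b(2) by (rule converse_rtrancl_into_rtrancl)
        then show ?thesis using col_eq b by metis
      next
        case False
        have "\<not> (\<exists>b\<in>D. (q,b) \<in> GL\<^sup>*)"
          using False pq converse_rtrancl_into_rtrancl by metis
        then show ?thesis using False unfolding col_def by simp
      qed
    qed
    have colK: "\<And>p. col p \<in> K"
    proof -
      fix p
      show "col p \<in> K"
      proof (cases "\<exists>b\<in>D. (p,b) \<in> GL\<^sup>*")
        case True
        then have "(SOME b. b \<in> D \<and> (p,b) \<in> GL\<^sup>*) \<in> D" by (metis (mono_tags, lifting) someI_ex)
        then show ?thesis using True \<phi>m unfolding col_def by simp
      next
        case False then show ?thesis unfolding col_def K_def by simp
      qed
    qed
    define \<psi> where "\<psi> = (\<lambda>x d. col (x,d))"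
    have colH: "\<And>x. x \<in> verts M \<Longrightarrow> colouring (H x) (\<psi> x)"
      unfolding colouring_def
    proof (intro conjI ballI)
      fix x d assume x: "x \<in> verts M" and d: "d \<in> darts (H x)"
      show "\<psi> x d \<in> K" unfolding \<psi>_def by (rule colK)
      have "((x,d), \<alpha> (x,d)) \<in> GL" using gl2 x d unfolding U_def by simp
      then show "\<psi> x (mate (H x) d) = \<psi> x d" unfolding \<psi>_def \<alpha>_def using col_link by simp
    next
      fix x u assume x: "x \<in> verts M" and u: "u \<in> verts (H x)"
      have inj: "inj_on \<phi> {p \<in> D. inc HP p = Some (x,u)}"
        using cl x u HPv HPd unfolding colouring_def by auto
      show "inj_on (\<psi> x) {d \<in> darts (H x). inc (H x) d = Some u}"
      proof (rule inj_onI)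
        fix d1 d2 assume d1: "d1 \<in> {d \<in> darts (H x). inc (H x) d = Some u}"
          and d2: "d2 \<in> {d \<in> darts (H x). inc (H x) d = Some u}" and eq: "\<psi> x d1 = \<psi> x d2"
        have D1: "(x,d1) \<in> D" "(x,d2) \<in> D" using vtxD x d1 d2 by auto
        have "\<phi> (x,d1) = \<phi> (x,d2)" using eq col_eq[OF rtrancl_refl D1(1)] col_eq[OF rtrancl_refl D1(2)]
          unfolding \<psi>_def by simp
        then have "(x,d1) = (x,d2)" using inj D1 d1 d2 HPi unfolding inj_on_def by auto
        then show "d1 = d2" by simp
      qed
    qed
    have evH: "\<And>x. x \<in> verts M \<Longrightarrow> even (card {i\<in>{0..<3}. flow (\<psi> x) (CH x i) \<noteq> 0})"
      using colH H_even unfolding even222_def by blast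
    define F where "F = (\<lambda>e. flow (\<psi> (the (inc M e))) (aconn M CH \<sigma> e))"
    have cardx: "\<And>x. x \<in> verts M \<Longrightarrow> card {e \<in> darts M. inc M e = Some x \<and> F e \<noteq> 0}
        = card {i\<in>{0..<3}. flow (\<psi> x) (CH x i) \<noteq> 0}"
    proof -
      fix x assume x: "x \<in> verts M"
      have "{e \<in> darts M. inc M e = Some x \<and> F e \<noteq> 0} = \<sigma> x ` {i\<in>{0..<3}. flow (\<psi> x) (CH x i) \<noteq> 0}"
      proof
        show "{e \<in> darts M. inc M e = Some x \<and> F e \<noteq> 0} \<subseteq> \<sigma> x ` {i\<in>{0..<3}. flow (\<psi> x) (CH x i) \<noteq> 0}"
        proof
          fix e assume e: "e \<in> {e \<in> darts M. inc M e = Some x \<and> F e \<noteq> 0}"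
          then have e1: "e \<in> darts M" "inc M e = Some x" "F e \<noteq> 0" by auto
          note i = idx1[OF e1(1,2)]
          have "flow (\<psi> x) (CH x (idx x e)) \<noteq> 0" using e1 ac[OF e1(1,2)] unfolding F_def by simp
          then show "e \<in> \<sigma> x ` {i\<in>{0..<3}. flow (\<psi> x) (CH x i) \<noteq> 0}"
            using i by (intro image_eqI[of _ _ "idx x e"]) auto
        qed
      next
        show "\<sigma> x ` {i\<in>{0..<3}. flow (\<psi> x) (CH x i) \<noteq> 0} \<subseteq> {e \<in> darts M. inc M e = Some x \<and> F e \<noteq> 0}"
        proof
          fix e assume "e \<in> \<sigma> x ` {i\<in>{0..<3}. flow (\<psi> x) (CH x i) \<noteq> 0}"
          then obtain i where i: "i < 3" "flow (\<psi> x) (CH x i) \<noteq> 0" "e = \<sigma> x i" by auto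
          note ii = idx2[OF x i(1)]
          have "F e = flow (\<psi> x) (CH x i)" unfolding F_def using ac[of e x] ii i by simp
          then show "e \<in> {e \<in> darts M. inc M e = Some x \<and> F e \<noteq> 0}" using ii i by simp
        qed
      qed
      moreover have "inj_on (\<sigma> x) {i\<in>{0..<3}. flow (\<psi> x) (CH x i) \<noteq> 0}"
      proof -
        have "inj_on (\<sigma> x) {0..<3}" using \<sigma>_bij x unfolding bij_betw_def by blast
        then show ?thesis by (rule inj_on_subset) auto
      qed
      ultimately show "card {e \<in> darts M. inc M e = Some x \<and> F e \<noteq> 0}
        = card {i\<in>{0..<3}. flow (\<psi> x) (CH x i) \<noteq> 0}" by (simp add: card_image)
    qed
    have finM: "finite (darts M)" "finite (verts M)" using M_mp unfolding multipole_def by auto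
    define E where "E = {e \<in> darts M. inc M e \<noteq> None \<and> F e \<noteq> 0}"
    have EU: "E = (\<Union>x\<in>verts M. {e \<in> darts M. inc M e = Some x \<and> F e \<noteq> 0})"
      unfolding E_def using Mi by auto
    have "card E = (\<Sum>x\<in>verts M. card {e \<in> darts M. inc M e = Some x \<and> F e \<noteq> 0})"
      unfolding EU by (rule card_UN_disjoint) (use finM in auto)
    then have evE: "even (card E)" using cardx evH by (simp add: dvd_sum)
    define E1 where "E1 = {e\<in>E. inc M (mate M e) \<noteq> None}"
    define E2 where "E2 = {e\<in>E. inc M (mate M e) = None}"
    have finE: "finite E" unfolding E_def using finM by simp
    have cE: "card E = card E1 + card E2"
    proof -
      have "E = E1 \<union> E2" "E1 \<inter> E2 = {}" unfolding E1_def E2_def by auto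
      then show ?thesis using finE card_Un_disjoint[of E1 E2] unfolding E1_def E2_def by auto
    qed
    have FJ: "\<And>e x y. e \<in> darts M \<Longrightarrow> inc M e = Some x \<Longrightarrow> inc M (mate M e) = Some y \<Longrightarrow> F (mate M e) = F e"
    proof -
      fix e x y assume e: "e \<in> darts M" "inc M e = Some x" "inc M (mate M e) = Some y"
      have bj: "bij_betw (J e) (aconn M CH \<sigma> e) (aconn M CH \<sigma> (mate M e))" using J_junction e by auto
      have "F (mate M e) = (\<Sum>d'\<in>aconn M CH \<sigma> (mate M e). col (y,d'))"
        unfolding F_def flow_def \<psi>_def using e by simp
      also have "\<dots> = (\<Sum>d\<in>aconn M CH \<sigma> e. col (y, J e d))"
        using sum.reindex_bij_betw[OF bj, of "\<lambda>d'. col (y,d')"] by simp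
      also have "\<dots> = (\<Sum>d\<in>aconn M CH \<sigma> e. col (x, d))"
      proof (rule sum.cong[OF refl])
        fix d assume "d \<in> aconn M CH \<sigma> e"
        then have "((x,d),(y, J e d)) \<in> GL" unfolding GL_def glink_def using e by blast
        then show "col (y, J e d) = col (x,d)" using col_link by metis
      qed
      also have "\<dots> = F e" unfolding F_def flow_def \<psi>_def using e by simp
      finally show "F (mate M e) = F e" .
    qed
    have evE1: "even (card E1)"
    proof (rule invol_even[where g = "mate M"])
      show "finite E1" using finE unfolding E1_def by simp
      show "\<forall>x\<in>E1. mate M x \<in> E1 \<and> mate M x \<noteq> x \<and> mate M (mate M x) = x"
      proof
        fix e assume e: "e \<in> E1"
        then have e1: "e \<in> darts M" "inc M e \<noteq> None" "F e \<noteq> 0" "inc M (mate M e) \<noteq> None"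
          unfolding E1_def E_def by auto
        have "F (mate M e) = F e" using FJ e1 by blast
        then show "mate M e \<in> E1 \<and> mate M e \<noteq> e \<and> mate M (mate M e) = e"
          using Mm[OF e1(1)] e1 unfolding E1_def E_def by auto
      qed
    qed
    define t where "t = (\<lambda>i. mate M (s i))"
    have E2eq: "E2 = t ` {i\<in>{0..<3}. F (t i) \<noteq> 0}"
    proof
      show "E2 \<subseteq> t ` {i\<in>{0..<3}. F (t i) \<noteq> 0}"
      proof
        fix e assume e: "e \<in> E2"
        then have e1: "e \<in> darts M" "F e \<noteq> 0" "inc M (mate M e) = None"
          unfolding E2_def E_def by auto
        then have "mate M e \<in> semiedges M" using Mm unfolding semiedges_def by simp
        then obtain i where i: "i < 3" "mate M e = s i" using M_semi by auto
        have "e = mate M (mate M e)" using Mm e1(1) by simp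
        then have "e = t i" unfolding t_def using i(2) by simp
        then show "e \<in> t ` {i\<in>{0..<3}. F (t i) \<noteq> 0}" using i e1 by auto
      qed
    next
      show "t ` {i\<in>{0..<3}. F (t i) \<noteq> 0} \<subseteq> E2"
        using tf unfolding t_def E2_def E_def by auto
    qed
    have tinj: "inj_on t {i\<in>{0..<3}. F (t i) \<noteq> 0}"
    proof (rule inj_onI)
      fix i j assume i: "i \<in> {i\<in>{0..<3}. F (t i) \<noteq> 0}" and j: "j \<in> {i\<in>{0..<3}. F (t i) \<noteq> 0}"
        and eq: "t i = t j"
      have ij: "i < 3" "j < 3" using i j by auto
      have "s i = mate M (t i)" "s j = mate M (t j)" using tf[OF ij(1)] tf[OF ij(2)] unfolding t_def by auto
      then have "s i = s j" using eq by simp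
      then show "i = j" using s_inj i j unfolding inj_on_def by auto
    qed
    have flc: "\<And>i. i < 3 \<Longrightarrow> flow \<phi> (HM_conn M CH \<sigma> s i) = F (t i)"
    proof -
      fix i :: nat assume i: "i < 3"
      have "flow \<phi> (HM_conn M CH \<sigma> s i) = (\<Sum>d\<in>aconn M CH \<sigma> (t i). \<phi> (v i, d))"
        unfolding flow_def conn_eq[OF i] t_def using sum.reindex[OF injP] by (simp add: comp_def)
      also have "\<dots> = (\<Sum>d\<in>aconn M CH \<sigma> (t i). col (v i, d))"
        using col_eq[OF rtrancl_refl] conn_nj[OF i] unfolding t_def by (intro sum.cong) auto
      also have "\<dots> = F (t i)" unfolding F_def flow_def \<psi>_def t_def using tf[OF i] by simp
      finally show "flow \<phi> (HM_conn M CH \<sigma> s i) = F (t i)" .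
    qed
    have "{i\<in>{0..<3}. flow \<phi> (HM_conn M CH \<sigma> s i) \<noteq> 0} = {i\<in>{0..<3}. F (t i) \<noteq> 0}"
      using flc by auto
    moreover have "card E2 = card {i\<in>{0..<3}. F (t i) \<noteq> 0}"
      using E2eq tinj by (simp add: card_image)
    ultimately show "even (card {i\<in>{0..<3}. flow \<phi> (HM_conn M CH \<sigma> s i) \<noteq> 0})"
      using evE evE1 cE by simp
  qed
  show ?thesis using poleHP evHP unfolding HP_def by simp
qed

end
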